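(* For every positive integer $n$, $$\big(\mathrm{Id}\ast(\mathrm{Id}\cdot\delta)\big)(n)=\sigma(n)\delta(n)-\big(\mathrm{Id}^2\ast\delta\big)(n),$$ where $\mathrm{Id}\cdot\delta$ is $n\mapsto n\delta(n)$ and $\mathrm{Id}^2(n)=n^2$.
   Context: The arithmetic derivative $\delta$ is defined by $\delta(p)=1$ for every prime $p$ and $\delta(mn)=m\delta(n)+n\delta(m)$ for all positive integers $m,n$; equivalently $\delta(1)=0$ and $\delta(n)=n\sum_{p^\alpha\| n}\alpha/p$. $\mathrm{Id}(n)=n$, $\sigma(n)$ is the sum of the positive divisors of $n$. The Dirichlet convolution is $(u\ast v)(n)=\sum_{d\mid n}u(d)v(n/d)$. *)

theory Defs
  imports "HOL-Computational_Algebra.Computational_Algebra" "HOL-Number_Theory.Number_Theory"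
begin

text \<open>Arithmetic derivative: delta 1 = 0 and delta n = n * (sum over p^a || n of a/p).
  Written over the naturals as the sum of a * (n div p), which is exact since p divides n.\<close>
definition arith_deriv :: "nat \<Rightarrow> nat" where
  "arith_deriv n = (\<Sum>p\<in>prime_factors n. multiplicity p n * (n div p))"

definition divisor_sum :: "nat \<Rightarrow> nat" where
  "divisor_sum n = (\<Sum>d | d dvd n. d)"

definition dirichlet_conv :: "(nat \<Rightarrow> nat) \<Rightarrow> (nat \<Rightarrow> nat) \<Rightarrow> nat \<Rightarrow> nat" where
  "dirichlet_conv u v n = (\<Sum>d | d dvd n. u d * v (n div d))"

end

theory Submission
  imports Defs
begin

lemma ad_sum:
  assumes "d > 0" "finite S" "prime_factors d \<subseteq> S" "\<forall>p\<in>S. prime p"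
  shows "arith_deriv d = (\<Sum>p\<in>S. multiplicity p d * (d div p))"
  unfolding arith_deriv_def
proof (rule sum.mono_neutral_left[OF assms(2,3)])
  show "\<forall>i\<in>S - prime_factors d. multiplicity i d * (d div i) = 0"
    using assms by (auto simp: prime_factors_multiplicity)
qed

lemma term_mult:
  assumes "prime (p::nat)" "d > 0" "e > 0"
  shows "multiplicity p d * (d * e div p) = e * (multiplicity p d * (d div p))"
proof (cases "p dvd d")
  case True
  then obtain k where "d = p * k" by blast
  then show ?thesis using assms by (simp add: prime_gt_0_nat)
next
  case False
  then show ?thesis by (simp add: not_dvd_imp_multiplicity_0)
qed

lemma ad_mult:
  assumes "d > 0" "e > 0"
  shows "arith_deriv (d * e) = e * arith_deriv d + d * arith_deriv e"
proof -
  let ?S = "prime_factors d \<union> prime_factors e"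
  have fin: "finite ?S" by simp
  have pr: "\<forall>p\<in>?S. prime p" by auto
  have "prime_factors (d*e) = ?S" using assms by (simp add: prime_factors_product)
  then have "arith_deriv (d*e) = (\<Sum>p\<in>?S. multiplicity p (d*e) * (d*e div p))"
    using ad_sum[of "d*e" ?S] assms pr by simp
  also have "\<dots> = (\<Sum>p\<in>?S. e * (multiplicity p d * (d div p)) + d * (multiplicity p e * (e div p)))"
  proof (rule sum.cong[OF refl])
    fix p assume "p \<in> ?S"
    then have p: "prime p" by auto
    have "multiplicity p (d*e) = multiplicity p d + multiplicity p e"
      using assms p by (simp add: prime_elem_multiplicity_mult_distrib)
    moreover have "multiplicity p e * (d * e div p) = d * (multiplicity p e * (e div p))"
      using term_mult[OF p assms(2,1)] by (simp add: mult.commute)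
    ultimately show "multiplicity p (d*e) * (d*e div p) = e * (multiplicity p d * (d div p)) + d * (multiplicity p e * (e div p))"
      using term_mult[OF p assms] by (metis add_mult_distrib)
  qed
  also have "\<dots> = e * arith_deriv d + d * arith_deriv e"
    using ad_sum[of d ?S] ad_sum[of e ?S] assms pr
    by (simp add: sum.distrib sum_distrib_left)
  finally show ?thesis .
qed

lemma divdiv: "(n::nat) > 0 \<Longrightarrow> a dvd n \<Longrightarrow> n div (n div a) = a \<and> n div a dvd n"
proof -
  assume "n > 0" "a dvd n"
  then obtain k where k: "n = a * k" by auto
  with \<open>n > 0\<close> have "a > 0" "k > 0" by (simp_all add: nat_0_less_mult_iff)
  with k show ?thesis by auto
qed

lemma swap_div:
  fixes n :: nat
  assumes "n > 0"
  shows "(\<Sum>d | d dvd n. g d (n div d)) = (\<Sum>d | d dvd n. g (n div d) d)"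
proof (rule sum.reindex_bij_witness[where i="\<lambda>d. n div d" and j="\<lambda>d. n div d"])
  fix a assume "a \<in> {d. d dvd n}"
  then show "n div (n div a) = a" "n div a \<in> {d. d dvd n}"
  proof -
    from \<open>a \<in> _\<close> obtain k where k: "n = a * k" by auto
    with assms have "a > 0" "k > 0" by (simp_all add: nat_0_less_mult_iff)
    with k show "n div (n div a) = a" "n div a \<in> {d. d dvd n}" by auto
  qed
next
  fix a assume "a \<in> {d. d dvd n}"
  then show "g (n div (n div a)) (n div a) = g a (n div a)"
  proof -
    from \<open>a \<in> _\<close> obtain k where k: "n = a * k" by auto
    with assms have "a > 0" "k > 0" by (simp_all add: nat_0_less_mult_iff)
    with k show ?thesis by auto
  qed
qed (use divdiv assms in auto)

theorem corollary2p4: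
  fixes n :: nat
  assumes "n > 0"
  shows "int (dirichlet_conv (\<lambda>k. k) (\<lambda>k. k * arith_deriv k) n)
         = int (divisor_sum n * arith_deriv n) - int (dirichlet_conv (\<lambda>k. k ^ 2) arith_deriv n)"
proof -
  have key: "divisor_sum n * arith_deriv n
     = dirichlet_conv (\<lambda>k. k) (\<lambda>k. k * arith_deriv k) n + dirichlet_conv (\<lambda>k. k ^ 2) arith_deriv n"
  proof -
    have "divisor_sum n * arith_deriv n = (\<Sum>d | d dvd n. d * arith_deriv (d * (n div d)))"
      unfolding divisor_sum_def by (simp add: sum_distrib_right)
    also have "\<dots> = (\<Sum>d | d dvd n. d * (n div d) * arith_deriv d + d^2 * arith_deriv (n div d))"
    proof (rule sum.cong[OF refl])
      fix d assume "d \<in> {d. d dvd n}"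
      then have "d > 0" "n div d > 0" using assms by (auto intro!: Nat.gr0I simp: dvd_div_eq_0_iff)
      then show "d * arith_deriv (d * (n div d)) = d * (n div d) * arith_deriv d + d^2 * arith_deriv (n div d)"
        by (simp add: ad_mult algebra_simps power2_eq_square)
    qed
    also have "\<dots> = (\<Sum>d | d dvd n. d * (n div d) * arith_deriv d) + dirichlet_conv (\<lambda>k. k ^ 2) arith_deriv n"
      unfolding dirichlet_conv_def by (simp add: sum.distrib)
    also have "(\<Sum>d | d dvd n. d * (n div d) * arith_deriv d) = (\<Sum>d | d dvd n. (n div d) * d * arith_deriv (n div d))"
      using swap_div[OF assms, of "\<lambda>a b. a * b * arith_deriv a"] by simp
    also have "\<dots> = dirichlet_conv (\<lambda>k. k) (\<lambda>k. k * arith_deriv k) n"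
      unfolding dirichlet_conv_def by (simp only: mult.assoc mult.left_commute)
    finally show ?thesis .
  qed
  show ?thesis by (simp add: key)
qed

end
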